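(* Fix positive integers $\ell,m$. Let $F\subset\mathbb{R}[x]$ be an infinite set of polynomials. Suppose each $f\in F$ is a sum of $\ell$ squares of polynomials each having at most $m$ monomial terms, and that all nonzero coefficients of all $f\in F$ belong to a fixed finite set $C\subset\mathbb{R}$. Then there exist infinitely many distinct $f_1,f_2,\ldots\in F$, matrices $P_1,P_2,\ldots\in\mathbb{N}^{\ell\times m}$, and a single family of real numbers $(\bar a_{ij})$ such that for all $k$, $$f_k=S_{P_k}(x)\big|_{a_{ij}=\bar a_{ij}}.$$
   Context: For $P=(p_{ij})\in\mathbb{N}^{\ell\times m}$ and indeterminates $a_{ij}$, define $$S_P(x):=\sum_{i=1}^\ell\Big(\sum_{j=1}^m a_{ij}x^{p_{ij}}\Big)^2\in\mathbb{N}[a_{ij}][x].$$ The exponent matrices may be taken ordered so that $p_{11}\ge p_{21}\ge\cdots\ge p_{\ell1}$ and $p_{ij}>p_{i(j+1)}$. *)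

theory Defs
  imports "HOL-Computational_Algebra.Polynomial"
begin

text \<open>S_P(x) with the indeterminates a_ij specialised to real values a i j;
  P i j is the exponent p_ij (indices i < l, j < m, 0-based).\<close>
definition S_P :: "nat \<Rightarrow> nat \<Rightarrow> (nat \<Rightarrow> nat \<Rightarrow> nat) \<Rightarrow> (nat \<Rightarrow> nat \<Rightarrow> real) \<Rightarrow> real poly" where
  "S_P l m P a = (\<Sum>i<l. (\<Sum>j<m. monom (a i j) (P i j))^2)"

definition num_terms :: "real poly \<Rightarrow> nat" where
  "num_terms g = card {n. coeff g n \<noteq> 0}"

definition sos_sparse :: "nat \<Rightarrow> nat \<Rightarrow> real poly \<Rightarrow> bool" where
  "sos_sparse l m f = (\<exists>g :: nat \<Rightarrow> real poly.
      (\<forall>i<l. num_terms (g i) \<le> m) \<and> f = (\<Sum>i<l. (g i)^2))"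

definition ordered_exps :: "nat \<Rightarrow> nat \<Rightarrow> (nat \<Rightarrow> nat \<Rightarrow> nat) \<Rightarrow> bool" where
  "ordered_exps l m P = ((\<forall>i. Suc i < l \<longrightarrow> P (Suc i) 0 \<le> P i 0) \<and>
      (\<forall>i<l. \<forall>j. Suc j < m \<longrightarrow> P i (Suc j) < P i j))"

end

theory Submission
  imports Defs "HOL-Library.FuncSet"
begin

lemma row_rep:
  assumes "num_terms g \<le> m"
  shows "\<exists>p b. (\<forall>j. Suc j < m \<longrightarrow> p (Suc j) < p j) \<and> g = (\<Sum>j<m. monom (b j) (p j))"
proof -
  define Sg where "Sg = {n. coeff g n \<noteq> 0}"
  have Sgsub: "Sg \<subseteq> {..degree g}" unfolding Sg_def using le_degree by auto
  hence finSg: "finite Sg" using finite_subset by blast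
  have cSg: "card Sg \<le> m" using assms unfolding num_terms_def Sg_def by simp
  define D where "D = {Suc (degree g)..<Suc (degree g) + (m - card Sg)}"
  define E where "E = Sg \<union> D"
  have disj: "Sg \<inter> D = {}" using Sgsub unfolding D_def by auto
  have finE: "finite E" unfolding E_def D_def using finSg by simp
  have cE: "card E = m" unfolding E_def using card_Un_disjoint[OF finSg _ disj] cSg
    unfolding D_def by simp
  define L where "L = sorted_list_of_set E"
  define R where "R = rev L"
  have lenL: "length L = m" unfolding L_def using cE by simp
  have lenR: "length R = m" unfolding R_def using lenL by simp
  have distR: "distinct R" unfolding R_def L_def by simp
  have setR: "set R = E" unfolding R_def L_def using finE by simp
  have ssL: "sorted_wrt (<) L" unfolding L_def by simp
  have dec: "\<forall>j. Suc j < m \<longrightarrow> R ! (Suc j) < R ! j"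
  proof (intro allI impI)
    fix j assume j: "Suc j < m"
    have "R ! Suc j = L ! (m - Suc (Suc j))" "R ! j = L ! (m - Suc j)"
      unfolding R_def using j lenL by (simp_all add: rev_nth)
    moreover have "L ! (m - Suc (Suc j)) < L ! (m - Suc j)"
      using sorted_wrt_nth_less[OF ssL, of "m - Suc (Suc j)" "m - Suc j"] j lenL by simp
    ultimately show "R ! Suc j < R ! j" by simp
  qed
  have g1: "g = (\<Sum>e\<in>E. monom (coeff g e) e)"
  proof (rule poly_eqI)
    fix n
    have "coeff (\<Sum>e\<in>E. monom (coeff g e) e) n = (\<Sum>e\<in>E. if e = n then coeff g e else 0)"
      by (simp add: coeff_sum coeff_monom)
    also have "\<dots> = (if n \<in> E then coeff g n else 0)"
      using finE by (simp add: sum.delta)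
    also have "\<dots> = coeff g n" unfolding E_def Sg_def by auto
    finally show "coeff g n = coeff (\<Sum>e\<in>E. monom (coeff g e) e) n" by simp
  qed
  have bij: "bij_betw ((!) R) {..<m} E" using bij_betw_nth[OF distR] lenR setR by simp
  have "g = (\<Sum>j<m. monom (coeff g (R!j)) (R!j))"
    using g1 sum.reindex_bij_betw[OF bij, of "\<lambda>e. monom (coeff g e) e"] by simp
  thus ?thesis using dec
    by (intro exI[of _ "\<lambda>j. R!j"] exI[of _ "\<lambda>j. coeff g (R!j)"] conjI) auto
qed

lemma exists_rep:
  assumes "sos_sparse l m f"
  shows "\<exists>P a. ordered_exps l m P \<and> f = S_P l m P a"
proof -
  obtain g where g: "\<forall>i<l. num_terms (g i) \<le> m" "f = (\<Sum>i<l. (g i)^2)"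
    using assms unfolding sos_sparse_def by blast
  have "\<forall>i. \<exists>p b. i < l \<longrightarrow> (\<forall>j. Suc j < m \<longrightarrow> p (Suc j) < p j) \<and> g i = (\<Sum>j<m. monom (b j) (p j))"
    using g(1) row_rep by blast
  then obtain p b where pb: "\<And>i. i < l \<Longrightarrow> (\<forall>j. Suc j < m \<longrightarrow> p i (Suc j) < p i j) \<and> g i = (\<Sum>j<m. monom (b i j) (p i j))"
    by metis
  define ys where "ys = sort_key (\<lambda>i. p i 0) [0..<l]"
  define xs where "xs = rev ys"
  have lys: "length ys = l" unfolding ys_def by simp
  have lxs: "length xs = l" unfolding xs_def using lys by simp
  have dxs: "distinct xs" unfolding xs_def ys_def by simp
  have sxs: "set xs = {..<l}" unfolding xs_def ys_def by auto
  have sorted: "sorted (map (\<lambda>i. p i 0) ys)" unfolding ys_def by simp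
  define P where "P = (\<lambda>i j. p (xs ! i) j)"
  define a where "a = (\<lambda>i j. b (xs ! i) j)"
  have xl: "\<And>i. i < l \<Longrightarrow> xs ! i < l" using sxs lxs nth_mem by fastforce
  have ord: "ordered_exps l m P"
    unfolding ordered_exps_def
  proof (intro conjI allI impI)
    fix i assume i: "Suc i < l"
    have "xs ! Suc i = ys ! (l - Suc (Suc i))" "xs ! i = ys ! (l - Suc i)"
      unfolding xs_def using i lys by (simp_all add: rev_nth)
    moreover have "(map (\<lambda>i. p i 0) ys) ! (l - Suc (Suc i)) \<le> (map (\<lambda>i. p i 0) ys) ! (l - Suc i)"
      using sorted_nth_mono[OF sorted, of "l - Suc (Suc i)" "l - Suc i"] i lys by simp
    ultimately show "P (Suc i) 0 \<le> P i 0" unfolding P_def using i lys by simp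
  next
    fix i j assume i: "i < l" and j: "Suc j < m"
    show "P i (Suc j) < P i j" unfolding P_def using pb[OF xl[OF i]] j by blast
  qed
  have "S_P l m P a = (\<Sum>i<l. (g (xs ! i))^2)"
    unfolding S_P_def P_def a_def using pb xl by (intro sum.cong) auto
  also have "\<dots> = (\<Sum>i<l. (g i)^2)"
  proof -
    have bij: "bij_betw ((!) xs) {..<l} {..<l}" using bij_betw_nth[OF dxs] lxs sxs by simp
    show ?thesis by (rule sum.reindex_bij_betw[OF bij])
  qed
  finally show ?thesis using ord g(2) by metis
qed

definition exs :: "(nat \<Rightarrow> nat \<Rightarrow> nat) \<Rightarrow> nat \<times> nat \<times> nat \<Rightarrow> nat" where
  "exs P t = P (fst t) (fst (snd t)) + P (fst t) (snd (snd t))"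
definition wt :: "(nat \<Rightarrow> nat \<Rightarrow> real) \<Rightarrow> nat \<times> nat \<times> nat \<Rightarrow> real" where
  "wt a t = a (fst t) (fst (snd t)) * a (fst t) (snd (snd t))"
definition TT :: "nat \<Rightarrow> nat \<Rightarrow> (nat \<times> nat \<times> nat) set" where
  "TT l m = {..<l} \<times> {..<m} \<times> {..<m}"

lemma finite_TT: "finite (TT l m)" unfolding TT_def by simp

lemma S_P_expand: "S_P l m P a = (\<Sum>t\<in>TT l m. monom (wt a t) (exs P t))"
proof -
  have sq: "(\<Sum>j<m. monom (a i j) (P i j))^2 = (\<Sum>j<m. \<Sum>j'<m. monom (a i j * a i j') (P i j + P i j'))" for i
    by (simp add: power2_eq_square sum_product mult_monom)
  have "S_P l m P a = (\<Sum>i<l. \<Sum>j<m. \<Sum>j'<m. monom (a i j * a i j') (P i j + P i j'))"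
    unfolding S_P_def using sq by simp
  also have "\<dots> = (\<Sum>i<l. \<Sum>(j,j')\<in>{..<m}\<times>{..<m}. monom (a i j * a i j') (P i j + P i j'))"
    by (simp add: sum.cartesian_product)
  also have "\<dots> = (\<Sum>(i,jj)\<in>{..<l}\<times>({..<m}\<times>{..<m}). monom (a i (fst jj) * a i (snd jj)) (P i (fst jj) + P i (snd jj)))"
    by (simp add: sum.cartesian_product split_def)
  also have "\<dots> = (\<Sum>t\<in>TT l m. monom (wt a t) (exs P t))"
    unfolding TT_def wt_def exs_def by (simp add: split_def)
  finally show ?thesis .
qed

lemma coeff_S_P: "coeff (S_P l m P a) n = (\<Sum>t\<in>{t\<in>TT l m. exs P t = n}. wt a t)"
  by (simp add: S_P_expand coeff_sum coeff_monom sum.inter_filter[OF finite_TT])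

theorem lemma4p2:
  fixes l m :: nat and F :: "real poly set" and C :: "real set"
  assumes "l > 0" and "m > 0"
    and "infinite F"
    and "\<forall>f\<in>F. sos_sparse l m f"
    and "finite C"
    and "\<forall>f\<in>F. \<forall>n. coeff f n \<noteq> 0 \<longrightarrow> coeff f n \<in> C"
  shows "\<exists>(fs :: nat \<Rightarrow> real poly) (Ps :: nat \<Rightarrow> nat \<Rightarrow> nat \<Rightarrow> nat) (abar :: nat \<Rightarrow> nat \<Rightarrow> real).
           inj fs \<and> (\<forall>k. fs k \<in> F) \<and> (\<forall>k. ordered_exps l m (Ps k)) \<and>
           (\<forall>k. fs k = S_P l m (Ps k) abar)"
proof -
  define rep where "rep f = (SOME Pa. ordered_exps l m (fst Pa) \<and> f = S_P l m (fst Pa) (snd Pa))" for f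
  have rep: "ordered_exps l m (fst (rep f)) \<and> f = S_P l m (fst (rep f)) (snd (rep f))" if fF0: "f \<in> F" for f
  proof -
    obtain P a where "ordered_exps l m P \<and> f = S_P l m P a" using exists_rep[of l m f] assms(4) fF0 by blast
    hence "\<exists>Pa. ordered_exps l m (fst Pa) \<and> f = S_P l m (fst Pa) (snd Pa)" by (intro exI[of _ "(P,a)"]) simp
    thus ?thesis unfolding rep_def by (rule someI_ex)
  qed
  define T where "T = TT l m"
  have finT: "finite T" unfolding T_def by (rule finite_TT)
  define tyf where "tyf f = ({(t,t'). t \<in> T \<and> t' \<in> T \<and> exs (fst (rep f)) t = exs (fst (rep f)) t'},
      restrict (\<lambda>t. coeff f (exs (fst (rep f)) t)) T)" for f
  have "tyf ` F \<subseteq> Pow (T \<times> T) \<times> PiE T (\<lambda>_. insert 0 C)"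
  proof
    fix x assume "x \<in> tyf ` F"
    then obtain f where f: "f \<in> F" "x = tyf f" by blast
    have "coeff f n \<in> insert 0 C" for n using assms(6) f(1) by blast
    hence "restrict (\<lambda>t. coeff f (exs (fst (rep f)) t)) T \<in> PiE T (\<lambda>_. insert 0 C)"
      by (simp add: restrict_PiE_iff)
    moreover have "{(t,t'). t \<in> T \<and> t' \<in> T \<and> exs (fst (rep f)) t = exs (fst (rep f)) t'} \<in> Pow (T \<times> T)"
      by blast
    ultimately show "x \<in> Pow (T \<times> T) \<times> PiE T (\<lambda>_. insert 0 C)" unfolding f(2) tyf_def
      by (simp only: mem_Times_iff fst_conv snd_conv)
  qed
  moreover have "finite (Pow (T \<times> T) \<times> PiE T (\<lambda>_. insert 0 C))"
  proof (rule finite_cartesian_product)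
    show "finite (Pow (T \<times> T))" using finT by simp
    show "finite (PiE T (\<lambda>_. insert 0 C))" by (rule finite_PiE[OF finT]) (use assms(5) in simp)
  qed
  ultimately have "finite (tyf ` F)" by (rule finite_subset)
  from pigeonhole_infinite[OF assms(3) this]
  obtain f0 where f0: "f0 \<in> F" and infG: "infinite {f\<in>F. tyf f = tyf f0}"
    by blast
  define G where "G = {f\<in>F. tyf f = tyf f0}"
  obtain fs :: "nat \<Rightarrow> real poly" where fs: "inj fs" "range fs \<subseteq> G"
    using infinite_iff_countable_subset[THEN iffD1, OF infG] unfolding G_def by (elim exE conjE) assumption
  define P0 where "P0 = fst (rep f0)"
  define a0 where "a0 = snd (rep f0)"
  have key: "f = S_P l m (fst (rep f)) a0" if fG: "f \<in> G" for f
  proof (rule poly_eqI)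
    fix n
    define P where "P = fst (rep f)"
    define a where "a = snd (rep f)"
    have fF: "f \<in> F" and ty: "tyf f = tyf f0" using fG unfolding G_def by auto
    have repf: "f = S_P l m P a" using rep[OF fF] unfolding P_def a_def by blast
    have repf0: "f0 = S_P l m P0 a0" using rep[OF f0] unfolding P0_def a0_def by blast
    have R: "\<And>t t'. t \<in> T \<Longrightarrow> t' \<in> T \<Longrightarrow> (exs P t = exs P t') = (exs P0 t = exs P0 t')"
    proof -
      fix t t' assume "t \<in> T" "t' \<in> T"
      have "fst (tyf f) = fst (tyf f0)" using ty by simp
      hence "((t,t') \<in> fst (tyf f)) = ((t,t') \<in> fst (tyf f0))" by simp
      thus "(exs P t = exs P t') = (exs P0 t = exs P0 t')"
        using \<open>t \<in> T\<close> \<open>t' \<in> T\<close> unfolding tyf_def P_def P0_def by simp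
    qed
    have Cc: "\<And>t. t \<in> T \<Longrightarrow> coeff f (exs P t) = coeff f0 (exs P0 t)"
    proof -
      fix t assume "t \<in> T"
      have "snd (tyf f) t = snd (tyf f0) t" using ty by simp
      thus "coeff f (exs P t) = coeff f0 (exs P0 t)"
        using \<open>t \<in> T\<close> unfolding tyf_def P_def P0_def by simp
    qed
    show "coeff f n = coeff (S_P l m (fst (rep f)) a0) n"
    proof (cases "\<exists>t0\<in>T. exs P t0 = n")
      case True
      then obtain t0 where t0: "t0 \<in> T" "exs P t0 = n" by blast
      have "{t\<in>T. exs P t = n} = {t\<in>T. exs P0 t = exs P0 t0}"
        by (intro Collect_cong) (metis R t0)
      hence "coeff (S_P l m P a0) n = coeff (S_P l m P0 a0) (exs P0 t0)"
        unfolding coeff_S_P T_def by simp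
      also have "\<dots> = coeff f0 (exs P0 t0)" using repf0 by simp
      also have "\<dots> = coeff f n" using Cc[OF t0(1)] t0(2) by simp
      finally show ?thesis unfolding P_def by simp
    next
      case False
      hence e0: "{t\<in>T. exs P t = n} = {}" by auto
      hence e: "{t\<in>TT l m. exs P t = n} = {}" unfolding T_def .
      have "coeff f n = coeff (S_P l m P a) n" using repf by simp
      also have "\<dots> = 0" by (simp only: coeff_S_P e sum.empty)
      also have "0 = coeff (S_P l m P a0) n" by (simp only: coeff_S_P e sum.empty)
      finally show ?thesis unfolding P_def by simp
    qed
  qed
  have "inj fs \<and> (\<forall>k. fs k \<in> F) \<and> (\<forall>k. ordered_exps l m (fst (rep (fs k)))) \<and>
           (\<forall>k. fs k = S_P l m (fst (rep (fs k))) a0)"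
  proof (intro conjI allI)
    show "inj fs" by (rule fs(1))
    fix k
    have "fs k \<in> G" using fs(2) by blast
    thus "fs k \<in> F" unfolding G_def by blast
    show "ordered_exps l m (fst (rep (fs k)))" using rep \<open>fs k \<in> F\<close> by blast
    show "fs k = S_P l m (fst (rep (fs k))) a0" by (rule key[OF \<open>fs k \<in> G\<close>])
  qed
  thus ?thesis by (intro exI[of _ fs] exI[of _ "\<lambda>k. fst (rep (fs k))"] exI[of _ a0])
qed

end
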